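(* Let $C=(Q,\Sigma,\Psi)$ be a HMM over a finite profile language $\Gamma=\{\beta_1,\dots,\beta_K\}$ with labelling reduction $L=(Q,\hat\Sigma,\hat M)$. Then for any initial distributions $\pi_1,\pi_2$, $\pi_1\equiv_L\pi_2$ implies $\pi_1\equiv_C\pi_2$.
   Context: Let $(\Sigma,\mathscr{G},\lambda)$ be a measure space where $\Sigma$ is a topological space and every open subset belongs to $\mathscr{G}$ and has positive measure. A HMM is $(Q,\Sigma,\Psi)$ with $Q$ finite and $\Psi:\Sigma\to[0,\infty)^{|Q|\times|Q|}$ piecewise continuous (continuous on an open set $C'$ such that every point outside $C'$ is a limit of points $x_n\in C'$ with $\Psi(x_n)$ converging to its value) with $\int_\Sigma\Psi\,d\lambda$ stochastic. For an initial distribution $\pi$, $\mathbb{P}_\pi$ is the unique probability measure on $\Sigma^\omega$ with $\mathbb{P}_\pi(A\Sigma^\omega)=\pi\left(\int_A\Psi\,d\lambda^n\right)\mathbbm{1}^T$ for all cylinder sets $A=A_1\times\dots\times A_n\subseteq\Sigma^n$, where $\Psi(x_1\cdots x_n)=\Psi(x_1)\cdots\Psi(x_n)$ and $\lambda^n$ is the product measure; $\pi_1\equiv_C\pi_2$ means $\mathbb{P}_{\pi_1}=\mathbb{P}_{\pi_2}$. For a finite observation set with counting measure, $\Psi$ is just a family of matrices $\Psi(a)$ with $\sum_a\Psi(a)$ stochastic. Profiles $\gamma$ encode functions $[\![\gamma]\!]:\Sigma\to[0,\infty)$. $C$ is over $\Gamma$ if $\Psi$ is given as a matrix whose entries are $0$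 or pairs $(p_{i,j},\gamma_{i,j})\in\mathbb{Q}_+\times\Gamma$ with $\Psi_{i,j}=p_{i,j}[\![\gamma_{i,j}]\!]$ and $\int_\Sigma[\![\gamma_{i,j}]\!]d\lambda=1$. The labelling reduction is the finite-observation HMM $(Q,\hat\Sigma,\hat M)$ with $\hat\Sigma=\{a_1,\dots,a_K\}$ fresh letters and $\hat M_{i,j}(a_k)=p_{i,j}$ if $\gamma_{i,j}=\beta_k$ and $0$ otherwise. *)

theory Defs
  imports "HOL-Probability.Probability"
begin

type_synonym 'q mat = "'q \<Rightarrow> 'q \<Rightarrow> real"

definition mat_one :: "'q mat" where
  "mat_one i j = (if i = j then 1 else 0)"

definition mat_mult :: "'q::finite mat \<Rightarrow> 'q mat \<Rightarrow> 'q mat" where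
  "mat_mult A B i j = (\<Sum>k\<in>UNIV. A i k * B k j)"

fun word_prod :: "('a \<Rightarrow> 'q::finite mat) \<Rightarrow> nat \<Rightarrow> (nat \<Rightarrow> 'a) \<Rightarrow> 'q mat" where
  "word_prod Psi 0 x = mat_one"
| "word_prod Psi (Suc n) x = mat_mult (word_prod Psi n x) (Psi (x n))"

definition cyl_value ::
  "'a measure \<Rightarrow> ('a \<Rightarrow> 'q::finite mat) \<Rightarrow> ('q \<Rightarrow> real) \<Rightarrow> nat \<Rightarrow> (nat \<Rightarrow> 'a set) \<Rightarrow> ennreal" where
  "cyl_value M Psi \<pi> n A =
     (\<Sum>i\<in>UNIV. \<Sum>j\<in>UNIV. ennreal (\<pi> i) *
        (\<integral>\<^sup>+ x. indicator (PiE {..<n} A) x * ennreal (word_prod Psi n x i j)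
            \<partial>(PiM {..<n} (\<lambda>_. M))))"

definition hmm_prob ::
  "'a measure \<Rightarrow> ('a \<Rightarrow> 'q::finite mat) \<Rightarrow> ('q \<Rightarrow> real) \<Rightarrow> 'a stream measure" where
  "hmm_prob M Psi \<pi> = (THE N. sets N = sets (stream_space M) \<and> prob_space N \<and>
      (\<forall>n A. (\<forall>i<n. A i \<in> sets M) \<longrightarrow>
         emeasure N {\<omega> \<in> space (stream_space M). \<forall>i<n. \<omega> !! i \<in> A i}
           = cyl_value M Psi \<pi> n A))"

definition hmm_equiv ::
  "'a measure \<Rightarrow> ('a \<Rightarrow> 'q::finite mat) \<Rightarrow> ('q \<Rightarrow> real) \<Rightarrow> ('q \<Rightarrow> real) \<Rightarrow> bool" where
  "hmm_equiv M Psi \<pi>1 \<pi>2 \<longleftrightarrow> hmm_prob M Psi \<pi>1 = hmm_prob M Psi \<pi>2"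

definition distribution :: "('q::finite \<Rightarrow> real) \<Rightarrow> bool" where
  "distribution \<pi> \<longleftrightarrow> (\<forall>i. \<pi> i \<ge> 0) \<and> (\<Sum>i\<in>UNIV. \<pi> i) = 1"

definition piecewise_continuous :: "('a::topological_space \<Rightarrow> 'b::topological_space) \<Rightarrow> bool" where
  "piecewise_continuous f \<longleftrightarrow> (\<exists>C'. open C' \<and> continuous_on C' f \<and>
     (\<forall>x. x \<notin> C' \<longrightarrow> (\<exists>X. (\<forall>n. X n \<in> C') \<and> X \<longlonglongrightarrow> x \<and> (\<lambda>n. f (X n)) \<longlonglongrightarrow> f x)))"

definition is_hmm :: "'a::topological_space measure \<Rightarrow> ('a \<Rightarrow> 'q::finite mat) \<Rightarrow> bool" where
  "is_hmm M Psi \<longleftrightarrow> (\<forall>x i j. Psi x i j \<ge> 0) \<and> piecewise_continuous Psi \<and>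
     (\<forall>i j. (\<lambda>x. Psi x i j) \<in> borel_measurable M) \<and>
     (\<forall>i. (\<Sum>j\<in>UNIV. \<integral>\<^sup>+ x. ennreal (Psi x i j) \<partial>M) = 1)"

definition psi_of :: "('g \<Rightarrow> 'a \<Rightarrow> real) \<Rightarrow> ('q \<Rightarrow> 'q \<Rightarrow> (real \<times> 'g) option) \<Rightarrow> 'a \<Rightarrow> 'q mat" where
  "psi_of sem E x i j = (case E i j of None \<Rightarrow> 0 | Some (p, \<gamma>) \<Rightarrow> p * sem \<gamma> x)"

text \<open>Labelling reduction: alphabet = the profiles (fresh letter a_k identified with beta_k).\<close>
definition label_red :: "('q \<Rightarrow> 'q \<Rightarrow> (real \<times> 'g) option) \<Rightarrow> 'g \<Rightarrow> 'q mat" where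
  "label_red E a i j = (case E i j of None \<Rightarrow> 0 | Some (p, \<gamma>) \<Rightarrow> if \<gamma> = a then p else 0)"

end

theory Submission
  imports Defs
begin

lemma mat_mult_assoc: "mat_mult (mat_mult A B) C = mat_mult A (mat_mult B C)"
proof (intro ext)
  fix i j
  show "mat_mult (mat_mult A B) C i j = mat_mult A (mat_mult B C) i j"
    unfolding mat_mult_def
    by (simp add: sum_distrib_left sum_distrib_right mult.assoc) (rule sum.swap)
qed

lemma mat_mult_one_left[simp]: "mat_mult mat_one A = A"
  by (intro ext) (simp add: mat_mult_def mat_one_def mult_delta_left)

lemma mat_mult_one_right[simp]: "mat_mult A mat_one = A"
  by (intro ext) (simp add: mat_mult_def mat_one_def mult_delta_right)

lemma word_prod_cong: "(\<And>k. k < n \<Longrightarrow> x k = y k) \<Longrightarrow> word_prod Psi n x = word_prod Psi n y"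
  by (induction n) auto

lemma word_prod_front:
  "word_prod Psi (Suc n) x = mat_mult (Psi (x 0)) (word_prod Psi n (\<lambda>k. x (Suc k)))"
  by (induction n) (auto simp: mat_mult_assoc)

lemma word_prod_nonneg:
  assumes "\<And>a i j. Psi a i j \<ge> (0::real)"
  shows "word_prod Psi n x i j \<ge> 0"
  using assms by (induction n arbitrary: j) (auto simp: mat_mult_def mat_one_def intro!: sum_nonneg)

lemma sum_PiE_Suc:
  assumes "\<And>k. finite (B k)"
  shows "(\<Sum>g\<in>PiE {..<Suc n} B. h g) = (\<Sum>g\<in>PiE {..<n} B. \<Sum>a\<in>B n. h (g(n:=a)))"
proof -
  have "(\<Sum>g\<in>PiE {..<Suc n} B. h g) = (\<Sum>g\<in>PiE (insert n {..<n}) B. h g)"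
    by (simp add: lessThan_Suc)
  also have "\<dots> = (\<Sum>p\<in>B n \<times> PiE {..<n} B. h ((\<lambda>(y, g). g(n := y)) p))"
    by (subst PiE_insert_eq, subst sum.reindex) (auto intro!: inj_combinator)
  also have "\<dots> = (\<Sum>a\<in>B n. \<Sum>g\<in>PiE {..<n} B. h (g(n:=a)))"
    by (simp add: sum.cartesian_product split_def)
  also have "\<dots> = (\<Sum>g\<in>PiE {..<n} B. \<Sum>a\<in>B n. h (g(n:=a)))"
    by (rule sum.swap)
  finally show ?thesis .
qed

lemma word_prod_decomp:
  fixes PsiL :: "'g::finite \<Rightarrow> 'q::finite mat" and s :: "'g \<Rightarrow> 'a \<Rightarrow> real"
  assumes dec: "\<And>x l j. Psi x l j = (\<Sum>a\<in>UNIV. PsiL a l j * s a x)"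
  shows "word_prod Psi n x i j = (\<Sum>g\<in>PiE {..<n} (\<lambda>_. UNIV).
            word_prod PsiL n g i j * (\<Prod>k<n. s (g k) (x k)))"
proof (induction n arbitrary: j)
  case 0
  then show ?case by simp
next
  case (Suc n)
  let ?P = "PiE {..<n} (\<lambda>_. UNIV::'g set)"
  have "word_prod Psi (Suc n) x i j = (\<Sum>l\<in>UNIV. word_prod Psi n x i l * Psi (x n) l j)"
    by (simp add: mat_mult_def)
  also have "\<dots> = (\<Sum>l\<in>UNIV. (\<Sum>g\<in>?P. word_prod PsiL n g i l * (\<Prod>k<n. s (g k) (x k))) *
                     (\<Sum>a\<in>UNIV. PsiL a l j * s a (x n)))"
    using Suc.IH by (simp add: dec[of "x n"])
  also have "\<dots> = (\<Sum>l\<in>UNIV. \<Sum>g\<in>?P. \<Sum>a\<in>UNIV. (word_prod PsiL n g i l * (\<Prod>k<n. s (g k) (x k))) *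
                     (PsiL a l j * s a (x n)))"
    by (simp add: sum_product)
  also have "\<dots> = (\<Sum>g\<in>?P. \<Sum>a\<in>UNIV. \<Sum>l\<in>UNIV. (word_prod PsiL n g i l * (\<Prod>k<n. s (g k) (x k))) *
                     (PsiL a l j * s a (x n)))"
    by (subst sum.swap, rule sum.cong[OF refl], rule sum.swap)
  also have "\<dots> = (\<Sum>g\<in>?P. \<Sum>a\<in>UNIV. word_prod PsiL (Suc n) (g(n:=a)) i j *
                     (\<Prod>k<Suc n. s ((g(n:=a)) k) (x k)))"
  proof (intro sum.cong refl)
    fix g a
    have w: "word_prod PsiL n (g(n:=a)) = word_prod PsiL n g"
      by (rule word_prod_cong) simp
    have p: "(\<Prod>k<Suc n. s ((g(n:=a)) k) (x k)) = (\<Prod>k<n. s (g k) (x k)) * s a (x n)"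
      by (simp add: prod.lessThan_Suc)
    show "(\<Sum>l\<in>UNIV. (word_prod PsiL n g i l * (\<Prod>k<n. s (g k) (x k))) *
                     (PsiL a l j * s a (x n))) = word_prod PsiL (Suc n) (g(n:=a)) i j *
                     (\<Prod>k<Suc n. s ((g(n:=a)) k) (x k))"
      unfolding p by (simp add: w mat_mult_def sum_distrib_left sum_distrib_right mult_ac)
  qed
  also have "\<dots> = (\<Sum>g\<in>PiE {..<Suc n} (\<lambda>_. UNIV). word_prod PsiL (Suc n) g i j *
                     (\<Prod>k<Suc n. s (g k) (x k)))"
    by (rule sum_PiE_Suc[symmetric]) simp
  finally show ?case .
qed

definition Gs :: "('g \<Rightarrow> 'q::finite mat) \<Rightarrow> nat \<Rightarrow> (nat \<Rightarrow> 'g set) \<Rightarrow> 'q mat" where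
  "Gs PsiL n A i j = (\<Sum>x\<in>PiE {..<n} A. word_prod PsiL n x i j)"

lemma Gs_word_prod:
  fixes PsiL :: "'g::finite \<Rightarrow> 'q::finite mat"
  shows "Gs PsiL n A = word_prod (\<lambda>M. M) n (\<lambda>k i j. \<Sum>a\<in>A k. PsiL a i j)"
proof (induction n)
  case 0
  show ?case by (intro ext) (simp add: Gs_def)
next
  case (Suc n)
  show ?case
  proof (intro ext)
    fix i j
    have "Gs PsiL (Suc n) A i j = (\<Sum>g\<in>PiE {..<n} A. \<Sum>a\<in>A n. word_prod PsiL (Suc n) (g(n:=a)) i j)"
      unfolding Gs_def by (rule sum_PiE_Suc) simp
    also have "\<dots> = (\<Sum>g\<in>PiE {..<n} A. \<Sum>a\<in>A n. \<Sum>l\<in>UNIV. word_prod PsiL n g i l * PsiL a l j)"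
    proof (intro sum.cong refl)
      fix g a
      have w: "word_prod PsiL n (g(n:=a)) = word_prod PsiL n g"
        by (rule word_prod_cong) simp
      show "word_prod PsiL (Suc n) (g(n:=a)) i j = (\<Sum>l\<in>UNIV. word_prod PsiL n g i l * PsiL a l j)"
        by (simp add: w mat_mult_def)
    qed
    also have "\<dots> = (\<Sum>l\<in>UNIV. (\<Sum>g\<in>PiE {..<n} A. word_prod PsiL n g i l) * (\<Sum>a\<in>A n. PsiL a l j))"
      by (simp add: sum_product) (subst sum.swap, rule sum.cong[OF refl], rule sum.swap)
    also have "\<dots> = word_prod (\<lambda>M. M) (Suc n) (\<lambda>k i j. \<Sum>a\<in>A k. PsiL a i j) i j"
      using Suc.IH by (simp add: mat_mult_def Gs_def[symmetric])
    finally show "Gs PsiL (Suc n) A i j = word_prod (\<lambda>M. M) (Suc n) (\<lambda>k i j. \<Sum>a\<in>A k. PsiL a i j) i j" .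
  qed
qed

lemma Gs_front:
  fixes PsiL :: "'g::finite \<Rightarrow> 'q::finite mat"
  shows "Gs PsiL (Suc n) A i j = (\<Sum>l\<in>UNIV. (\<Sum>a\<in>A 0. PsiL a i l) * Gs PsiL n (\<lambda>k. A (Suc k)) l j)"
  unfolding Gs_word_prod word_prod_front by (simp add: mat_mult_def)

lemma Gs_nonneg:
  assumes "\<And>a i j. PsiL a i j \<ge> (0::real)"
  shows "Gs PsiL n A i j \<ge> 0"
  unfolding Gs_def by (intro sum_nonneg word_prod_nonneg assms)

lemma PiM_count_singleton:
  fixes y :: "nat \<Rightarrow> 'g::finite"
  assumes y: "y \<in> extensional {..<n}"
  shows "{y} \<in> sets (PiM {..<n} (\<lambda>_. count_space UNIV))"
    and "emeasure (PiM {..<n} (\<lambda>_. count_space (UNIV::'g set))) {y} = 1"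
proof -
  interpret product_sigma_finite "\<lambda>_::nat. count_space (UNIV::'g set)"
    unfolding product_sigma_finite_def by (auto intro: sigma_finite_measure_count_space)
  have eq: "{y} = PiE {..<n} (\<lambda>k. {y k})"
    using PiE_singleton[OF y] by simp
  show "{y} \<in> sets (PiM {..<n} (\<lambda>_. count_space UNIV))"
    unfolding eq by (intro sets_PiM_I_finite) auto
  show "emeasure (PiM {..<n} (\<lambda>_. count_space (UNIV::'g set))) {y} = 1"
    unfolding eq by (subst emeasure_PiM) auto
qed

lemma nn_integral_PiM_count:
  fixes f :: "(nat \<Rightarrow> 'g::finite) \<Rightarrow> ennreal"
  shows "(\<integral>\<^sup>+x. indicator (PiE {..<n} A) x * f x \<partial>PiM {..<n} (\<lambda>_. count_space UNIV))
         = (\<Sum>x\<in>PiE {..<n} A. f x)"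
proof -
  let ?M = "PiM {..<n} (\<lambda>_. count_space (UNIV::'g set))"
  have fin: "finite (PiE {..<n} A)"
    by (intro finite_PiE) auto
  have "(\<integral>\<^sup>+x. indicator (PiE {..<n} A) x * f x \<partial>?M)
      = (\<integral>\<^sup>+x. (\<Sum>y\<in>PiE {..<n} A. f y * indicator {y} x) \<partial>?M)"
  proof (intro nn_integral_cong)
    fix x
    have "(\<Sum>y\<in>PiE {..<n} A. f y * indicator {y} x) = (\<Sum>y\<in>PiE {..<n} A. if y = x then f x else 0)"
      by (intro sum.cong) (auto simp: indicator_def)
    also have "\<dots> = indicator (PiE {..<n} A) x * f x"
      using fin by (simp add: sum.delta' indicator_def)
    finally show "indicator (PiE {..<n} A) x * f x = (\<Sum>y\<in>PiE {..<n} A. f y * indicator {y} x)" ..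
  qed
  also have "\<dots> = (\<Sum>y\<in>PiE {..<n} A. \<integral>\<^sup>+x. f y * indicator {y} x \<partial>?M)"
  proof (rule nn_integral_sum)
    fix y assume "y \<in> PiE {..<n} A"
    then have "{y} \<in> sets ?M" by (intro PiM_count_singleton) (auto simp: PiE_def)
    then show "(\<lambda>x. f y * indicator {y} x) \<in> borel_measurable ?M" by measurable
  qed
  also have "\<dots> = (\<Sum>y\<in>PiE {..<n} A. f y)"
  proof (intro sum.cong refl)
    fix y assume "y \<in> PiE {..<n} A"
    then have "y \<in> extensional {..<n}" by (auto simp: PiE_def)
    from PiM_count_singleton[OF this]
    show "(\<integral>\<^sup>+x. f y * indicator {y} x \<partial>?M) = f y"
      by (simp add: nn_integral_cmult_indicator)
  qed
  finally show ?thesis .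
qed

lemma cyl_count:
  fixes PsiL :: "'g::finite \<Rightarrow> 'q::finite mat"
  assumes nn: "\<And>a i j. PsiL a i j \<ge> 0"
  shows "cyl_value (count_space UNIV) PsiL \<pi> n A
       = (\<Sum>i\<in>UNIV. \<Sum>j\<in>UNIV. ennreal (\<pi> i) * ennreal (Gs PsiL n A i j))"
  unfolding cyl_value_def nn_integral_PiM_count Gs_def
  by (subst sum_ennreal) (auto intro!: word_prod_nonneg nn)

fun st :: "('q \<Rightarrow> 'g \<times> 'q) stream \<Rightarrow> 'q \<Rightarrow> nat \<Rightarrow> 'q" where
  "st fs i 0 = i"
| "st fs i (Suc n) = st (stl fs) (snd (shd fs i)) n"

definition obs :: "('q \<Rightarrow> 'g \<times> 'q) stream \<Rightarrow> 'q \<Rightarrow> nat \<Rightarrow> 'g" where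
  "obs fs i n = fst ((fs !! n) (st fs i n))"

lemma obs_0[simp]: "obs (f ## fs) i 0 = fst (f i)"
  by (simp add: obs_def)

lemma obs_Suc[simp]: "obs (f ## fs) i (Suc k) = obs fs (snd (f i)) k"
  by (simp add: obs_def)

lemma st_meas:
  fixes F :: "('q::countable \<Rightarrow> 'g \<times> 'q) pmf"
  shows "(\<lambda>fs. st fs i n) \<in> measurable (stream_space (measure_pmf F)) (count_space UNIV)"
proof (induction n arbitrary: i)
  case 0
  then show ?case by simp
next
  case (Suc n)
  have "(\<lambda>fs. (\<lambda>j fs. st (stl fs) j n) (snd (shd fs i)) fs)
      \<in> measurable (stream_space (measure_pmf F)) (count_space UNIV)"
    by (rule measurable_compose_countable[where f="\<lambda>j fs. st (stl fs) j n" and g="\<lambda>fs. snd (shd fs i)"])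
       (rule measurable_compose[OF measurable_stl Suc.IH], rule measurable_compose[OF measurable_shd], simp)
  then show ?case by simp
qed

lemma obs_meas:
  fixes F :: "('q::countable \<Rightarrow> 'g \<times> 'q) pmf"
  shows "(\<lambda>fs. obs fs i n) \<in> measurable (stream_space (measure_pmf F)) (count_space UNIV)"
proof -
  have "(\<lambda>fs. (\<lambda>j fs. fst ((fs !! n) j)) (st fs i n) fs)
      \<in> measurable (stream_space (measure_pmf F)) (count_space UNIV)"
    by (rule measurable_compose_countable[where f="\<lambda>j fs. fst ((fs !! n) j)" and g="\<lambda>fs. st fs i n"])
       (rule measurable_compose[OF measurable_snth], simp, rule st_meas)
  then show ?thesis by (simp add: obs_def)
qed

lemma obs_set_meas:
  fixes F :: "('q::countable \<Rightarrow> 'g \<times> 'q) pmf"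
  shows "{fs \<in> space (stream_space (measure_pmf F)). \<forall>k<n. obs fs i k \<in> A k}
     \<in> sets (stream_space (measure_pmf F))"
proof -
  have "{fs \<in> space (stream_space (measure_pmf F)). \<forall>k\<in>{..<n}. obs fs i k \<in> A k}
     \<in> sets (stream_space (measure_pmf F))"
  proof (rule sets.sets_Collect_finite_All)
    fix k
    have "(\<lambda>fs. obs fs i k) -` A k \<inter> space (stream_space (measure_pmf F)) \<in> sets (stream_space (measure_pmf F))"
      by (rule measurable_sets[OF obs_meas]) simp
    moreover have "(\<lambda>fs. obs fs i k) -` A k \<inter> space (stream_space (measure_pmf F))
       = {fs \<in> space (stream_space (measure_pmf F)). obs fs i k \<in> A k}" by auto
    ultimately show "{fs \<in> space (stream_space (measure_pmf F)). obs fs i k \<in> A k} \<in> sets (stream_space (measure_pmf F))"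
      by simp
  qed simp
  then show ?thesis by (simp only: Ball_def lessThan_iff)
qed

lemma prob_obs:
  fixes K :: "'q::finite \<Rightarrow> ('g::finite \<times> 'q) pmf" and PsiL :: "'g \<Rightarrow> 'q mat"
  assumes K: "\<And>i a l. pmf (K i) (a,l) = PsiL a i l" and nn: "\<And>a i j. PsiL a i j \<ge> 0"
  shows "emeasure (stream_space (measure_pmf (Pi_pmf UNIV undefined K)))
     {fs \<in> space (stream_space (measure_pmf (Pi_pmf UNIV undefined K))). \<forall>k<n. obs fs i k \<in> A k}
     = ennreal (\<Sum>j\<in>UNIV. Gs PsiL n A i j)"
proof (induction n arbitrary: i A)
  case 0
  interpret S: prob_space "stream_space (measure_pmf (Pi_pmf UNIV undefined K))"
    by (rule prob_space.prob_space_stream_space[OF prob_space_measure_pmf])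
  show ?case
    by (simp add: Gs_def mat_one_def S.emeasure_space_1)
next
  case (Suc n)
  define F where "F = Pi_pmf UNIV undefined K"
  let ?S = "stream_space (measure_pmf F)"
  define h where "h y = indicator (A 0) (fst y) * (\<Sum>j\<in>UNIV. Gs PsiL n (\<lambda>k. A (Suc k)) (snd y) j)" for y
  have hnn: "h y \<ge> 0" for y
    unfolding h_def by (intro mult_nonneg_nonneg sum_nonneg Gs_nonneg nn) auto
  have spS: "space ?S = UNIV" by (simp add: space_stream_space)
  have "emeasure ?S {fs \<in> space ?S. \<forall>k<Suc n. obs fs i k \<in> A k}
      = (\<integral>\<^sup>+t. emeasure ?S {x\<in>space ?S. t ## x \<in> {fs \<in> space ?S. \<forall>k<Suc n. obs fs i k \<in> A k}} \<partial>measure_pmf F)"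
    by (rule prob_space.emeasure_stream_space[OF prob_space_measure_pmf obs_set_meas])
  also have "\<dots> = (\<integral>\<^sup>+t. ennreal (h (t i)) \<partial>measure_pmf F)"
  proof (intro nn_integral_cong)
    fix t :: "'q \<Rightarrow> 'g \<times> 'q"
    have all: "(\<forall>k<Suc n. obs (t ## x) i k \<in> A k) \<longleftrightarrow>
               fst (t i) \<in> A 0 \<and> (\<forall>k<n. obs x (snd (t i)) k \<in> A (Suc k))" for x
      by (auto simp: less_Suc_eq_0_disj)
    show "emeasure ?S {x\<in>space ?S. t ## x \<in> {fs \<in> space ?S. \<forall>k<Suc n. obs fs i k \<in> A k}}
          = ennreal (h (t i))"
    proof (cases "fst (t i) \<in> A 0")
      case True
      then have e: "{x\<in>space ?S. t ## x \<in> {fs \<in> space ?S. \<forall>k<Suc n. obs fs i k \<in> A k}}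
          = {x\<in>space ?S. \<forall>k<n. obs x (snd (t i)) k \<in> A (Suc k)}"
        using all by (auto simp: spS)
      show ?thesis unfolding e using True Suc.IH[of "snd (t i)" "\<lambda>k. A (Suc k)"]
        by (simp add: h_def F_def)
    next
      case False
      then have e: "{x\<in>space ?S. t ## x \<in> {fs \<in> space ?S. \<forall>k<Suc n. obs fs i k \<in> A k}} = {}"
        using all by (auto simp: spS)
      show ?thesis unfolding e using False by (simp add: h_def)
    qed
  qed
  also have "\<dots> = (\<integral>\<^sup>+y. ennreal (h y) \<partial>measure_pmf (map_pmf (\<lambda>t. t i) F))"
    by simp
  also have "map_pmf (\<lambda>t. t i) F = K i"
    unfolding F_def by (subst Pi_pmf_component) auto
  also have "(\<integral>\<^sup>+y. ennreal (h y) \<partial>measure_pmf (K i)) = (\<Sum>y\<in>UNIV. ennreal (h y) * pmf (K i) y)"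
    by (rule nn_integral_measure_pmf_support) auto
  also have "\<dots> = ennreal (\<Sum>y\<in>UNIV. h y * pmf (K i) y)"
    by (subst sum_ennreal[symmetric]) (auto simp: hnn ennreal_mult)
  also have "(\<Sum>y\<in>UNIV. h y * pmf (K i) y) = (\<Sum>j\<in>UNIV. Gs PsiL (Suc n) A i j)"
  proof -
    have "(\<Sum>y\<in>UNIV. h y * pmf (K i) y) = (\<Sum>a\<in>UNIV. \<Sum>l\<in>UNIV. h (a,l) * PsiL a i l)"
      by (simp add: UNIV_Times_UNIV[symmetric] sum.cartesian_product del: UNIV_Times_UNIV)
         (intro sum.cong refl, auto simp: K)
    also have "\<dots> = (\<Sum>a\<in>A 0. \<Sum>l\<in>UNIV. (\<Sum>j\<in>UNIV. Gs PsiL n (\<lambda>k. A (Suc k)) l j) * PsiL a i l)"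
    proof -
      have "(\<Sum>a\<in>UNIV. \<Sum>l\<in>UNIV. h (a,l) * PsiL a i l) = (\<Sum>a\<in>UNIV. if a \<in> A 0 then
              (\<Sum>l\<in>UNIV. (\<Sum>j\<in>UNIV. Gs PsiL n (\<lambda>k. A (Suc k)) l j) * PsiL a i l) else 0)"
        by (intro sum.cong) (auto simp: h_def)
      also have "\<dots> = (\<Sum>a\<in>A 0. \<Sum>l\<in>UNIV. (\<Sum>j\<in>UNIV. Gs PsiL n (\<lambda>k. A (Suc k)) l j) * PsiL a i l)"
        by (subst sum.inter_filter[symmetric]) auto
      finally show ?thesis .
    qed
    also have "\<dots> = (\<Sum>j\<in>UNIV. \<Sum>l\<in>UNIV. (\<Sum>a\<in>A 0. PsiL a i l) * Gs PsiL n (\<lambda>k. A (Suc k)) l j)"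
    proof -
      let ?G = "Gs PsiL n (\<lambda>k. A (Suc k))"
      have "(\<Sum>a\<in>A 0. \<Sum>l\<in>UNIV. (\<Sum>j\<in>UNIV. ?G l j) * PsiL a i l)
          = (\<Sum>a\<in>A 0. \<Sum>l\<in>UNIV. \<Sum>j\<in>UNIV. PsiL a i l * ?G l j)"
        by (simp add: sum_distrib_left sum_distrib_right mult_ac)
      also have "\<dots> = (\<Sum>l\<in>UNIV. \<Sum>a\<in>A 0. \<Sum>j\<in>UNIV. PsiL a i l * ?G l j)"
        by (rule sum.swap)
      also have "\<dots> = (\<Sum>l\<in>UNIV. \<Sum>j\<in>UNIV. \<Sum>a\<in>A 0. PsiL a i l * ?G l j)"
        by (intro sum.cong refl sum.swap)
      also have "\<dots> = (\<Sum>j\<in>UNIV. \<Sum>l\<in>UNIV. \<Sum>a\<in>A 0. PsiL a i l * ?G l j)"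
        by (rule sum.swap)
      also have "\<dots> = (\<Sum>j\<in>UNIV. \<Sum>l\<in>UNIV. (\<Sum>a\<in>A 0. PsiL a i l) * ?G l j)"
        by (simp add: sum_distrib_right)
      finally show ?thesis .
    qed
    also have "\<dots> = (\<Sum>j\<in>UNIV. Gs PsiL (Suc n) A i j)"
      by (simp add: Gs_front)
    finally show ?thesis .
  qed
  finally show ?case by (simp add: F_def)
qed

lemma cyl_set_sets:
  fixes M :: "'a measure"
  assumes "\<And>k. k < n \<Longrightarrow> A k \<in> sets M"
  shows "{\<omega> \<in> space (stream_space M). \<forall>k<n. \<omega> !! k \<in> A k} \<in> sets (stream_space M)"
proof -
  have "{\<omega> \<in> space (stream_space M). \<forall>k\<in>{..<n}. \<omega> !! k \<in> A k} \<in> sets (stream_space M)"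
  proof (rule sets.sets_Collect_finite_All)
    fix k assume k: "k \<in> {..<n}"
    have "(\<lambda>\<omega>. \<omega> !! k) -` A k \<inter> space (stream_space M) \<in> sets (stream_space M)"
      by (rule measurable_sets[OF measurable_snth]) (use assms k in auto)
    moreover have "(\<lambda>\<omega>. \<omega> !! k) -` A k \<inter> space (stream_space M)
       = {\<omega> \<in> space (stream_space M). \<omega> !! k \<in> A k}" by auto
    ultimately show "{\<omega> \<in> space (stream_space M). \<omega> !! k \<in> A k} \<in> sets (stream_space M)"
      by simp
  qed simp
  then show ?thesis by (simp only: Ball_def lessThan_iff)
qed

lemma hmm_count_spec:
  fixes PsiL :: "'g::finite \<Rightarrow> 'q::finite mat"
  assumes nn: "\<And>a i j. PsiL a i j \<ge> 0"
    and stoch: "\<And>i. (\<Sum>a\<in>UNIV. \<Sum>j\<in>UNIV. PsiL a i j) = 1"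
    and d: "distribution \<pi>"
  shows "sets (hmm_prob (count_space UNIV) PsiL \<pi>) = sets (stream_space (count_space UNIV)) \<and>
         prob_space (hmm_prob (count_space UNIV) PsiL \<pi>) \<and>
      (\<forall>n A. (\<forall>i<n. A i \<in> sets (count_space UNIV)) \<longrightarrow>
         emeasure (hmm_prob (count_space UNIV) PsiL \<pi>)
            {\<omega> \<in> space (stream_space (count_space UNIV)). \<forall>i<n. \<omega> !! i \<in> A i}
           = cyl_value (count_space UNIV) PsiL \<pi> n A)"
  unfolding hmm_prob_def
proof (rule theI')
  let ?C = "stream_space (count_space (UNIV::'g set))"
  let ?P = "\<lambda>N. sets N = sets ?C \<and> prob_space N \<and>
      (\<forall>n A. (\<forall>i<n. A i \<in> sets (count_space UNIV)) \<longrightarrow>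
         emeasure N {\<omega> \<in> space ?C. \<forall>i<n. \<omega> !! i \<in> A i}
           = cyl_value (count_space UNIV) PsiL \<pi> n A)"
  have spC: "space ?C = UNIV" by (simp add: space_stream_space)
  have pinn: "\<pi> i \<ge> 0" for i using d by (simp add: distribution_def)
  have pisum: "(\<Sum>i\<in>UNIV. \<pi> i) = 1" using d by (simp add: distribution_def)
  define K where "K i = embed_pmf (\<lambda>(a,l). PsiL a i l)" for i
  have K: "pmf (K i) (a,l) = PsiL a i l" for i a l
  proof -
    have "(\<integral>\<^sup>+x. ennreal ((\<lambda>(a,l). PsiL a i l) x) \<partial>count_space UNIV) = 1"
    proof -
      have "(\<integral>\<^sup>+x. ennreal ((\<lambda>(a,l). PsiL a i l) x) \<partial>count_space UNIV)
          = (\<Sum>x\<in>UNIV. ennreal ((\<lambda>(a,l). PsiL a i l) x))"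
        by (rule nn_integral_count_space_finite) simp
      also have "\<dots> = ennreal (\<Sum>x\<in>UNIV. (\<lambda>(a,l). PsiL a i l) x)"
        by (rule sum_ennreal) (auto simp: nn)
      also have "(\<Sum>x\<in>UNIV. (\<lambda>(a,l). PsiL a i l) x) = (\<Sum>a\<in>UNIV. \<Sum>j\<in>UNIV. PsiL a i j)"
        by (simp add: UNIV_Times_UNIV[symmetric] sum.cartesian_product del: UNIV_Times_UNIV)
      finally show ?thesis using stoch by simp
    qed
    then show ?thesis
      unfolding K_def by (subst pmf_embed_pmf) (auto simp: nn)
  qed
  define P0 where "P0 = embed_pmf \<pi>"
  have P0: "pmf P0 i = \<pi> i" for i
  proof -
    have "(\<integral>\<^sup>+x. ennreal (\<pi> x) \<partial>count_space UNIV) = 1"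
      by (subst nn_integral_count_space_finite) (auto simp: pinn pisum)
    then show ?thesis unfolding P0_def by (subst pmf_embed_pmf) (auto simp: pinn)
  qed
  define F where "F = Pi_pmf UNIV undefined K"
  let ?S = "stream_space (measure_pmf F)"
  define run where "run i fs = to_stream (obs fs i)" for i and fs :: "('q \<Rightarrow> 'g \<times> 'q) stream"
  have run_meas: "run i \<in> measurable ?S ?C" for i
    unfolding run_def
    by (rule measurable_stream_space2) (simp add: to_stream_def obs_meas)
  define \<nu> where "\<nu> i = distr ?S ?C (run i)" for i
  have \<nu>_space: "\<nu> i \<in> space (subprob_algebra ?C)" for i
  proof -
    interpret S: prob_space ?S
      by (rule prob_space.prob_space_stream_space[OF prob_space_measure_pmf])
    have "prob_space (\<nu> i)" unfolding \<nu>_def by (rule S.prob_space_distr[OF run_meas])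
    then show ?thesis
      by (auto simp: space_subprob_algebra \<nu>_def intro: prob_space_imp_subprob_space)
  qed
  define N where "N = measure_pmf P0 \<bind> \<nu>"
  have \<nu>_meas: "\<nu> \<in> measurable (measure_pmf P0) (subprob_algebra ?C)"
    using \<nu>_space by simp
  have setsN: "sets N = sets ?C"
    unfolding N_def by (rule sets_bind) (auto simp: \<nu>_def)
  have cylN: "emeasure N {\<omega> \<in> space ?C. \<forall>k<n. \<omega> !! k \<in> A k}
        = cyl_value (count_space UNIV) PsiL \<pi> n A" for n A
  proof -
    let ?X = "{\<omega> \<in> space ?C. \<forall>k<n. \<omega> !! k \<in> A k}"
    have X: "?X \<in> sets ?C" by (rule cyl_set_sets) simp
    have "emeasure N ?X = (\<integral>\<^sup>+i. emeasure (\<nu> i) ?X \<partial>measure_pmf P0)"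
      unfolding N_def by (rule emeasure_bind[OF _ \<nu>_meas X]) simp
    also have "\<dots> = (\<Sum>i\<in>UNIV. emeasure (\<nu> i) ?X * pmf P0 i)"
      by (rule nn_integral_measure_pmf_support) auto
    also have "\<dots> = (\<Sum>i\<in>UNIV. ennreal (\<Sum>j\<in>UNIV. Gs PsiL n A i j) * ennreal (\<pi> i))"
    proof (intro sum.cong refl)
      fix i
      have "emeasure (\<nu> i) ?X = emeasure ?S (run i -` ?X \<inter> space ?S)"
        unfolding \<nu>_def by (rule emeasure_distr[OF run_meas X])
      also have "run i -` ?X \<inter> space ?S = {fs \<in> space ?S. \<forall>k<n. obs fs i k \<in> A k}"
        by (auto simp: run_def to_stream_def spC)
      also have "emeasure ?S \<dots> = ennreal (\<Sum>j\<in>UNIV. Gs PsiL n A i j)"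
        unfolding F_def by (rule prob_obs[OF K nn])
      finally show "emeasure (\<nu> i) ?X * pmf P0 i = ennreal (\<Sum>j\<in>UNIV. Gs PsiL n A i j) * ennreal (\<pi> i)"
        by (simp add: P0)
    qed
    also have "\<dots> = (\<Sum>i\<in>UNIV. \<Sum>j\<in>UNIV. ennreal (\<pi> i) * ennreal (Gs PsiL n A i j))"
    proof (intro sum.cong refl)
      fix i
      have "ennreal (\<Sum>j\<in>UNIV. Gs PsiL n A i j) = (\<Sum>j\<in>UNIV. ennreal (Gs PsiL n A i j))"
        by (rule sum_ennreal[symmetric]) (simp add: Gs_nonneg nn)
      then show "ennreal (\<Sum>j\<in>UNIV. Gs PsiL n A i j) * ennreal (\<pi> i)
          = (\<Sum>j\<in>UNIV. ennreal (\<pi> i) * ennreal (Gs PsiL n A i j))"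
        by (simp add: sum_distrib_left mult.commute)
    qed
    also have "\<dots> = cyl_value (count_space UNIV) PsiL \<pi> n A"
      by (rule cyl_count[symmetric, OF nn])
    finally show ?thesis .
  qed
  have probN: "prob_space N"
  proof (rule prob_spaceI)
    have sp: "space N = {\<omega> \<in> space ?C. \<forall>k<(0::nat). \<omega> !! k \<in> (\<lambda>_. UNIV::'g set) k}"
      using sets_eq_imp_space_eq[OF setsN] by simp
    have "emeasure N (space N) = cyl_value (count_space UNIV) PsiL \<pi> 0 (\<lambda>_. UNIV)"
      unfolding sp by (rule cylN)
    also have "\<dots> = (\<Sum>i\<in>UNIV. \<Sum>j\<in>UNIV. ennreal (\<pi> i) * ennreal (Gs PsiL 0 (\<lambda>_. UNIV) i j))"
      by (rule cyl_count[OF nn])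
    also have "\<dots> = (\<Sum>i\<in>UNIV. ennreal (\<pi> i))"
    proof (intro sum.cong refl)
      fix i
      have "(\<Sum>j\<in>UNIV. ennreal (\<pi> i) * ennreal (Gs PsiL 0 (\<lambda>_. UNIV) i j))
          = (\<Sum>j\<in>UNIV. if j = i then ennreal (\<pi> i) else 0)"
        by (intro sum.cong refl) (simp add: Gs_def mat_one_def)
      then show "(\<Sum>j\<in>UNIV. ennreal (\<pi> i) * ennreal (Gs PsiL 0 (\<lambda>_. UNIV) i j)) = ennreal (\<pi> i)"
        by simp
    qed
    also have "\<dots> = 1" by (subst sum_ennreal) (auto simp: pinn pisum)
    finally show "emeasure N (space N) = 1" .
  qed
  have "?P N" using setsN probN cylN by simp
  moreover have "N1 = N2" if "?P N1" "?P N2" for N1 N2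
  proof (rule stream_space_eq_sstart[where S=UNIV])
    show "prob_space N1" "prob_space N2" using that by auto
    show "sets N1 = sets ?C" "sets N2 = sets ?C" using that by auto
    show "AE x in N1. x \<in> streams UNIV" "AE x in N2. x \<in> streams UNIV" by simp_all
    fix xs :: "'g list"
    have e: "sstart UNIV xs = {\<omega> \<in> space ?C. \<forall>k<length xs. \<omega> !! k \<in> (\<lambda>k. {xs ! k}) k}"
      using sstart_eq[of _ UNIV xs] by (auto simp: spC)
    show "emeasure N1 (sstart UNIV xs) = emeasure N2 (sstart UNIV xs)"
      unfolding e using that by (simp del: singleton_iff insert_iff)
  qed simp
  ultimately show "\<exists>!N. ?P N" by blast
qed

lemma cyl_decomp:
  fixes PsiL :: "'g::finite \<Rightarrow> 'q::finite mat" and s :: "'g \<Rightarrow> 'a \<Rightarrow> real"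
  assumes dec: "\<And>x l j. Psi x l j = (\<Sum>a\<in>UNIV. PsiL a l j * s a x)"
    and nnL: "\<And>a i j. PsiL a i j \<ge> 0"
    and s_nn: "\<And>a x. s a x \<ge> 0"
    and s_meas: "\<And>a. s a \<in> borel_measurable M"
    and A: "\<And>k. k < n \<Longrightarrow> A k \<in> sets M"
  shows "cyl_value M Psi \<pi> n A = (\<Sum>g\<in>PiE {..<n} (\<lambda>_. UNIV).
     (\<Sum>i\<in>UNIV. \<Sum>j\<in>UNIV. ennreal (\<pi> i) * ennreal (word_prod PsiL n g i j)) *
     (\<integral>\<^sup>+x. indicator (PiE {..<n} A) x * ennreal (\<Prod>k<n. s (g k) (x k)) \<partial>PiM {..<n} (\<lambda>_. M)))"
proof -
  let ?PM = "PiM {..<n} (\<lambda>_. M)"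
  let ?G = "PiE {..<n} (\<lambda>_. UNIV::'g set)"
  let ?I = "\<lambda>g. (\<integral>\<^sup>+x. indicator (PiE {..<n} A) x * ennreal (\<Prod>k<n. s (g k) (x k)) \<partial>?PM)"
  have PiE_sets: "PiE {..<n} A \<in> sets ?PM"
    by (rule sets_PiM_I_finite) (auto intro: A)
  have meas: "(\<lambda>x. indicator (PiE {..<n} A) x * ennreal (\<Prod>k<n. s (g k) (x k))) \<in> borel_measurable ?PM" for g
  proof -
    have "(\<lambda>x. \<Prod>k<n. s (g k) (x k)) \<in> borel_measurable ?PM"
    proof (rule borel_measurable_prod)
      fix k assume "k \<in> {..<n}"
      then show "(\<lambda>x. s (g k) (x k)) \<in> borel_measurable ?PM"
        by (rule measurable_compose[where f="\<lambda>x. x k" and N=M, OF measurable_component_singleton s_meas])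
    qed
    then show ?thesis using PiE_sets by measurable
  qed
  have inner: "(\<integral>\<^sup>+x. indicator (PiE {..<n} A) x * ennreal (word_prod Psi n x i j) \<partial>?PM)
      = (\<Sum>g\<in>?G. ennreal (word_prod PsiL n g i j) * ?I g)" for i j
  proof -
    have "(\<integral>\<^sup>+x. indicator (PiE {..<n} A) x * ennreal (word_prod Psi n x i j) \<partial>?PM)
        = (\<integral>\<^sup>+x. (\<Sum>g\<in>?G. ennreal (word_prod PsiL n g i j) *
             (indicator (PiE {..<n} A) x * ennreal (\<Prod>k<n. s (g k) (x k)))) \<partial>?PM)"
    proof (intro nn_integral_cong)
      fix x
      have "ennreal (word_prod Psi n x i j) = ennreal (\<Sum>g\<in>?G. word_prod PsiL n g i j * (\<Prod>k<n. s (g k) (x k)))"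
        by (subst word_prod_decomp[OF dec]) (rule refl)
      also have "\<dots> = (\<Sum>g\<in>?G. ennreal (word_prod PsiL n g i j) * ennreal (\<Prod>k<n. s (g k) (x k)))"
      proof -
        have "ennreal (\<Sum>g\<in>?G. word_prod PsiL n g i j * (\<Prod>k<n. s (g k) (x k)))
            = (\<Sum>g\<in>?G. ennreal (word_prod PsiL n g i j * (\<Prod>k<n. s (g k) (x k))))"
          by (rule sum_ennreal[symmetric]) (intro mult_nonneg_nonneg word_prod_nonneg prod_nonneg nnL s_nn)
        also have "\<dots> = (\<Sum>g\<in>?G. ennreal (word_prod PsiL n g i j) * ennreal (\<Prod>k<n. s (g k) (x k)))"
        proof (intro sum.cong refl)
          fix g
          have "0 \<le> word_prod PsiL n g i j" by (intro word_prod_nonneg nnL)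
          moreover have "0 \<le> (\<Prod>k<n. s (g k) (x k))" by (intro prod_nonneg s_nn)
          ultimately show "ennreal (word_prod PsiL n g i j * (\<Prod>k<n. s (g k) (x k)))
              = ennreal (word_prod PsiL n g i j) * ennreal (\<Prod>k<n. s (g k) (x k))"
            by (rule ennreal_mult)
        qed
        finally show ?thesis .
      qed
      finally show "indicator (PiE {..<n} A) x * ennreal (word_prod Psi n x i j) =
          (\<Sum>g\<in>?G. ennreal (word_prod PsiL n g i j) *
             (indicator (PiE {..<n} A) x * ennreal (\<Prod>k<n. s (g k) (x k))))"
        by (simp add: sum_distrib_left mult_ac)
    qed
    also have "\<dots> = (\<Sum>g\<in>?G. \<integral>\<^sup>+x. ennreal (word_prod PsiL n g i j) *
             (indicator (PiE {..<n} A) x * ennreal (\<Prod>k<n. s (g k) (x k))) \<partial>?PM)"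
      by (rule nn_integral_sum) (intro borel_measurable_times_ennreal borel_measurable_const meas)
    also have "\<dots> = (\<Sum>g\<in>?G. ennreal (word_prod PsiL n g i j) * ?I g)"
      by (intro sum.cong refl nn_integral_cmult meas)
    finally show ?thesis .
  qed
  have "cyl_value M Psi \<pi> n A = (\<Sum>i\<in>UNIV. \<Sum>j\<in>UNIV. ennreal (\<pi> i) *
            (\<Sum>g\<in>?G. ennreal (word_prod PsiL n g i j) * ?I g))"
    unfolding cyl_value_def inner ..
  also have "\<dots> = (\<Sum>i\<in>UNIV. \<Sum>j\<in>UNIV. \<Sum>g\<in>?G. ennreal (\<pi> i) * ennreal (word_prod PsiL n g i j) * ?I g)"
    by (simp add: sum_distrib_left mult.assoc)
  also have "\<dots> = (\<Sum>i\<in>UNIV. \<Sum>g\<in>?G. \<Sum>j\<in>UNIV. ennreal (\<pi> i) * ennreal (word_prod PsiL n g i j) * ?I g)"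
    by (intro sum.cong refl sum.swap)
  also have "\<dots> = (\<Sum>g\<in>?G. \<Sum>i\<in>UNIV. \<Sum>j\<in>UNIV. ennreal (\<pi> i) * ennreal (word_prod PsiL n g i j) * ?I g)"
    by (rule sum.swap)
  also have "\<dots> = (\<Sum>g\<in>?G. (\<Sum>i\<in>UNIV. \<Sum>j\<in>UNIV. ennreal (\<pi> i) * ennreal (word_prod PsiL n g i j)) * ?I g)"
    by (simp add: sum_distrib_right)
  finally show ?thesis .
qed

theorem proposition9:
  fixes M :: "'a::topological_space measure"
    and sem :: "'g::finite \<Rightarrow> 'a \<Rightarrow> real"
    and E :: "'q::finite \<Rightarrow> 'q \<Rightarrow> (real \<times> 'g) option"
    and \<pi>1 \<pi>2 :: "'q \<Rightarrow> real"
  assumes space: "space M = UNIV"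
    and opens: "\<And>U. open U \<Longrightarrow> U \<in> sets M"
    and opens_pos: "\<And>U. open U \<Longrightarrow> U \<noteq> {} \<Longrightarrow> emeasure M U > 0"
    and sem_nonneg: "\<And>\<gamma> x. sem \<gamma> x \<ge> 0"
    and entries: "\<And>i j p \<gamma>. E i j = Some (p, \<gamma>) \<Longrightarrow>
        p \<in> \<rat> \<and> p > 0 \<and> sem \<gamma> \<in> borel_measurable M \<and> (\<integral>\<^sup>+ x. ennreal (sem \<gamma> x) \<partial>M) = 1"
    and hmm: "is_hmm M (psi_of sem E)"
    and d1: "distribution \<pi>1" and d2: "distribution \<pi>2"
    and L: "hmm_equiv (count_space UNIV) (label_red E) \<pi>1 \<pi>2"
  shows "hmm_equiv M (psi_of sem E) \<pi>1 \<pi>2"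
proof -
  define semm where "semm \<gamma> x = (if \<exists>i j p. E i j = Some (p, \<gamma>) then sem \<gamma> x else 0)" for \<gamma> x
  have semm_nn: "semm \<gamma> x \<ge> 0" for \<gamma> x by (simp add: semm_def sem_nonneg)
  have semm_meas: "semm \<gamma> \<in> borel_measurable M" for \<gamma>
  proof (cases "\<exists>i j p. E i j = Some (p, \<gamma>)")
    case True
    then obtain i j p where "E i j = Some (p, \<gamma>)" by blast
    then have "sem \<gamma> \<in> borel_measurable M" using entries by blast
    moreover have "semm \<gamma> = sem \<gamma>" using True by (simp add: semm_def fun_eq_iff)
    ultimately show ?thesis by simp
  next
    case False
    then have "semm \<gamma> = (\<lambda>_. 0)" by (simp add: semm_def fun_eq_iff)
    then show ?thesis by simp
  qed
  have dec: "psi_of sem E x l j = (\<Sum>a\<in>UNIV. label_red E a l j * semm a x)" for x l j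
  proof (cases "E l j")
    case None
    then show ?thesis by (simp add: psi_of_def label_red_def)
  next
    case (Some pg)
    then obtain p \<gamma> where S: "E l j = Some (p, \<gamma>)" by (cases pg) auto
    have "(\<Sum>a\<in>UNIV. label_red E a l j * semm a x) = (\<Sum>a\<in>UNIV. if a = \<gamma> then p * semm \<gamma> x else 0)"
      by (intro sum.cong refl) (auto simp: label_red_def S)
    also have "\<dots> = p * sem \<gamma> x" using S by (auto simp: semm_def)
    finally show ?thesis by (simp add: psi_of_def S)
  qed
  have nnL: "label_red E a i j \<ge> 0" for a i j
    using entries[of i j] by (auto simp: label_red_def split: option.splits)
  have stochL: "(\<Sum>a\<in>UNIV. \<Sum>j\<in>UNIV. label_red E a i j) = 1" for i
  proof -
    have int: "(\<integral>\<^sup>+x. ennreal (psi_of sem E x i j) \<partial>M) = ennreal (\<Sum>a\<in>UNIV. label_red E a i j)" for j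
    proof (cases "E i j")
      case None
      then show ?thesis by (simp add: psi_of_def label_red_def)
    next
      case (Some pg)
      then obtain p \<gamma> where S: "E i j = Some (p, \<gamma>)" by (cases pg) auto
      from entries[OF S] have p: "p > 0" and m: "sem \<gamma> \<in> borel_measurable M"
        and one: "(\<integral>\<^sup>+ x. ennreal (sem \<gamma> x) \<partial>M) = 1" by auto
      have "(\<integral>\<^sup>+x. ennreal (psi_of sem E x i j) \<partial>M) = (\<integral>\<^sup>+x. ennreal p * ennreal (sem \<gamma> x) \<partial>M)"
        using p by (intro nn_integral_cong) (simp add: psi_of_def S ennreal_mult sem_nonneg)
      also have "\<dots> = ennreal p * (\<integral>\<^sup>+x. ennreal (sem \<gamma> x) \<partial>M)"
        by (rule nn_integral_cmult) (use m in measurable)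
      also have "\<dots> = ennreal p" using one by simp
      also have "p = (\<Sum>a\<in>UNIV. label_red E a i j)"
        by (simp add: label_red_def S)
      finally show ?thesis .
    qed
    have "1 = (\<Sum>j\<in>UNIV. \<integral>\<^sup>+ x. ennreal (psi_of sem E x i j) \<partial>M)"
      using hmm by (simp add: is_hmm_def)
    also have "\<dots> = (\<Sum>j\<in>UNIV. ennreal (\<Sum>a\<in>UNIV. label_red E a i j))"
      by (simp add: int)
    also have "\<dots> = ennreal (\<Sum>j\<in>UNIV. \<Sum>a\<in>UNIV. label_red E a i j)"
      by (rule sum_ennreal) (intro sum_nonneg nnL)
    finally have "(\<Sum>j\<in>UNIV. \<Sum>a\<in>UNIV. label_red E a i j) = 1"
      by (metis ennreal_eq_1)
    then show ?thesis by (subst sum.swap)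
  qed
  have Leq: "cyl_value (count_space UNIV) (label_red E) \<pi>1 n A = cyl_value (count_space UNIV) (label_red E) \<pi>2 n A"
    for n A
  proof -
    let ?C = "stream_space (count_space (UNIV::'g set))"
    let ?X = "{\<omega> \<in> space ?C. \<forall>i<n. \<omega> !! i \<in> A i}"
    have "cyl_value (count_space UNIV) (label_red E) \<pi>1 n A = emeasure (hmm_prob (count_space UNIV) (label_red E) \<pi>1) ?X"
      using hmm_count_spec[OF nnL stochL d1] by simp
    also have "\<dots> = emeasure (hmm_prob (count_space UNIV) (label_red E) \<pi>2) ?X"
      using L by (simp add: hmm_equiv_def)
    also have "\<dots> = cyl_value (count_space UNIV) (label_red E) \<pi>2 n A"
      using hmm_count_spec[OF nnL stochL d2] by simp
    finally show ?thesis .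
  qed
  have coef: "(\<Sum>i\<in>UNIV. \<Sum>j\<in>UNIV. ennreal (\<pi> i) * ennreal (word_prod (label_red E) n g i j))
      = cyl_value (count_space UNIV) (label_red E) \<pi> n (\<lambda>k. {g k})"
    if g: "g \<in> PiE {..<n} (\<lambda>_. UNIV)" for \<pi> n g
  proof -
    have "g \<in> extensional {..<n}" using g by (simp add: PiE_def)
    then have "PiE {..<n} (\<lambda>k. {g k}) = {g}" by (rule PiE_singleton)
    then have "Gs (label_red E) n (\<lambda>k. {g k}) = word_prod (label_red E) n g"
      by (simp add: Gs_def fun_eq_iff)
    then show ?thesis by (simp add: cyl_count[OF nnL])
  qed
  have key: "cyl_value M (psi_of sem E) \<pi>1 n A = cyl_value M (psi_of sem E) \<pi>2 n A"
    if A: "\<forall>i<n. A i \<in> sets M" for n A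
  proof -
    have "cyl_value M (psi_of sem E) \<pi> n A = (\<Sum>g\<in>PiE {..<n} (\<lambda>_. UNIV).
       cyl_value (count_space UNIV) (label_red E) \<pi> n (\<lambda>k. {g k}) *
       (\<integral>\<^sup>+x. indicator (PiE {..<n} A) x * ennreal (\<Prod>k<n. semm (g k) (x k)) \<partial>PiM {..<n} (\<lambda>_. M)))"
      for \<pi>
    proof -
      have Ak: "\<And>k. k < n \<Longrightarrow> A k \<in> sets M" using A by auto
      show ?thesis
        apply (rule trans[OF cyl_decomp[where Psi="psi_of sem E" and PsiL="label_red E" and s=semm and M=M and n=n and A=A,
              OF dec nnL semm_nn semm_meas Ak]])
         apply simp
        apply (intro sum.cong refl arg_cong2[where f="(*)"])
        apply (erule coef)
        done
    qed
    then show ?thesis by (simp add: Leq)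
  qed
  show ?thesis
    unfolding hmm_equiv_def hmm_prob_def
    by (intro arg_cong[where f=The] ext) (use key in auto)
qed

end
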